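(* Let $\mathcal{M}\subset\mathbb{R}^n$ be a locally symmetric $C^2$ submanifold with characteristic permutation $\sigma_*$. Let $\sigma\in\Sigma^n$ and $\bar x\in\mathcal{M}\cap\Delta(\sigma)$, and let $v\in N_{\mathcal{M}}(\bar x)$. Then $v_i=v_j$ whenever $i,j\in\mathbb{N}_n\setminus\mathrm{supp}(\sigma_* )$ belong to the same cycle of $\sigma$; equivalently, writing $v^F\in\mathbb{R}^{\kappa_*}$ for the subvector of $v$ formed by the coordinates with indices in $\mathbb{N}_n\setminus\mathrm{supp}(\sigma_* )$, $v^F$ is constant on each set of the partition of these indices induced by the cycles of $\sigma$ contained in $\mathbb{N}_n\setminus\mathrm{supp}(\sigma_* )$.
   Context: $\Sigma^n$ is the group of permutations of $\mathbb{N}_n=\{1,\dots,n\}$, acting on $\mathbb{R}^n$ by $(\sigma x)_i=x_{\sigma^{-1}(i)}$; $\mathrm{supp}(\sigma)$ is the set of indices not fixed by $\sigma$. $P(\sigma)$ is the partition of $\mathbb{N}_n$ into orbits of $\sigma$; $P(x)$ is the partition in which $i,j$ are in the same set iff $x_i=x_j$; $\Delta(\sigma)=\{x:P(x)=P(\sigma)\}$. $\mathbb{R}^n_{\ge}=\{x:x_1\ge\cdots\ge x_n\}$; $B(x,\delta)$ open ball. A set $S$ is locally symmetric if $S\cap\mathbb{R}^n_{\ge}\neq\emptyset$ and for every $x\in S$ there is $\delta>0$ with $\sigma(S\cap B(x,\delta))=S\cap B(x,\delta)$ for all $y\in S\cap B(x,\delta)$ and all $\sigma$ with $\sigma y=y$.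 A locally symmetric $C^2$ submanifold is a connected $C^2$ submanifold without boundary which is locally symmetric. $N_{\mathcal{M}}(\bar x)$ is the normal space (orthogonal complement of the tangent space $T_{\mathcal{M}}(\bar x)$). A characteristic permutation is a $\sigma_*$ such that $\mathcal{M}\cap B(y,\delta)\subset\Delta(\sigma_* )$ for some $y\in\mathcal{M}$, $\delta>0$ (its partition is determined by $\mathcal{M}$); $\kappa_*=|\mathbb{N}_n\setminus\mathrm{supp}(\sigma_* )|$. *)

theory Defs
  imports "HOL-Analysis.Analysis" "HOL-Combinatorics.Permutations"
begin

text \<open>Vectors of R^n are modelled as real^'n, the index type 'n being a finite
linearly ordered type (playing the role of {1,...,n} with its usual order).\<close>

definition perm_act :: "('n::finite \<Rightarrow> 'n) \<Rightarrow> real^'n \<Rightarrow> real^'n" where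
  "perm_act \<sigma> x = (\<chi> i. x $ (inv \<sigma> i))"

definition supp :: "('n \<Rightarrow> 'n) \<Rightarrow> 'n set" where
  "supp \<sigma> = {i. \<sigma> i \<noteq> i}"

definition same_cycle :: "('n \<Rightarrow> 'n) \<Rightarrow> 'n \<Rightarrow> 'n \<Rightarrow> bool" where
  "same_cycle \<sigma> i j \<longleftrightarrow> (\<exists>k::nat. (\<sigma> ^^ k) i = j)"

definition perm_partition :: "('n \<Rightarrow> 'n) \<Rightarrow> 'n set set" where
  "perm_partition \<sigma> = {{j. same_cycle \<sigma> i j} | i. True}"

definition vec_partition :: "real^'n::finite \<Rightarrow> 'n set set" where
  "vec_partition x = {{j. x $ j = x $ i} | i. True}"

definition Delta :: "('n::finite \<Rightarrow> 'n) \<Rightarrow> (real^'n) set" where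
  "Delta \<sigma> = {x. vec_partition x = perm_partition \<sigma>}"

definition ordered_cone :: "(real^'n::{finite,linorder}) set" where
  "ordered_cone = {x. \<forall>i j. i \<le> j \<longrightarrow> x $ j \<le> x $ i}"

definition locally_symmetric :: "(real^'n::{finite,linorder}) set \<Rightarrow> bool" where
  "locally_symmetric S \<longleftrightarrow> S \<inter> ordered_cone \<noteq> {} \<and>
     (\<forall>x\<in>S. \<exists>\<delta>>0. \<forall>y\<in>S \<inter> ball x \<delta>. \<forall>\<sigma>.
        \<sigma> permutes UNIV \<and> perm_act \<sigma> y = y \<longrightarrow>
        perm_act \<sigma> ` (S \<inter> ball x \<delta>) = S \<inter> ball x \<delta>)"

definition C2_on :: "(real^'n::finite) set \<Rightarrow> (real^'n \<Rightarrow> real^'m::finite) \<Rightarrow> bool" where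
  "C2_on U f \<longleftrightarrow> (\<exists>f' f''.
     (\<forall>x\<in>U. (f has_derivative blinfun_apply (f' x)) (at x)) \<and>
     (\<forall>x\<in>U. (f' has_derivative blinfun_apply (f'' x)) (at x)) \<and>
     continuous_on U f'')"

text \<open>Connected C^2 submanifold without boundary of R^n (of some dimension d):
  locally straightened by a C^2 diffeomorphism onto a linear subspace.\<close>
definition C2_submanifold :: "(real^'n::finite) set \<Rightarrow> bool" where
  "C2_submanifold M \<longleftrightarrow> connected M \<and>
     (\<exists>d::nat. \<forall>x\<in>M. \<exists>U V (\<Phi>::real^'n \<Rightarrow> real^'n) (\<Psi>::real^'n \<Rightarrow> real^'n) L.
        open U \<and> x \<in> U \<and> open V \<and> C2_on U \<Phi> \<and> C2_on V \<Psi> \<and>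
        \<Phi> ` U = V \<and> (\<forall>y\<in>U. \<Psi> (\<Phi> y) = y) \<and> (\<forall>z\<in>V. \<Phi> (\<Psi> z) = z) \<and>
        subspace L \<and> dim L = d \<and> \<Phi> ` (M \<inter> U) = V \<inter> L)"

definition locally_symmetric_C2_submanifold :: "(real^'n::{finite,linorder}) set \<Rightarrow> bool" where
  "locally_symmetric_C2_submanifold M \<longleftrightarrow> C2_submanifold M \<and> locally_symmetric M"

definition tangent_space :: "(real^'n::finite) set \<Rightarrow> real^'n \<Rightarrow> (real^'n) set" where
  "tangent_space M x = {v. \<exists>\<gamma> \<epsilon>. \<epsilon> > 0 \<and> (\<forall>t. \<bar>t\<bar> < \<epsilon> \<longrightarrow> \<gamma> t \<in> M) \<and>
       \<gamma> 0 = x \<and> (\<gamma> has_vector_derivative v) (at 0)}"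

definition normal_space :: "(real^'n::finite) set \<Rightarrow> real^'n \<Rightarrow> (real^'n) set" where
  "normal_space M x = {v. \<forall>t\<in>tangent_space M x. v \<bullet> t = 0}"

definition characteristic_perm :: "(real^'n::finite) set \<Rightarrow> ('n \<Rightarrow> 'n) \<Rightarrow> bool" where
  "characteristic_perm M \<sigma> \<longleftrightarrow> \<sigma> permutes UNIV \<and>
     (\<exists>y\<in>M. \<exists>\<delta>>0. M \<inter> ball y \<delta> \<subseteq> Delta \<sigma>)"

end

theory Submission
  imports Defs
begin

lemma delta_same:
  assumes "x \<in> Delta \<sigma>" "same_cycle \<sigma> i j"
  shows "x $ i = x $ j"
proof -
  have "{k. same_cycle \<sigma> i k} \<in> perm_partition \<sigma>" unfolding perm_partition_def by blast
  then have "{k. same_cycle \<sigma> i k} \<in> vec_partition x" using assms(1) unfolding Delta_def by simp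
  then obtain m where m: "{k. same_cycle \<sigma> i k} = {k. x $ k = x $ m}" unfolding vec_partition_def by blast
  have "same_cycle \<sigma> i i" unfolding same_cycle_def by (rule exI[of _ 0]) simp
  then have "x $ i = x $ m" using m by blast
  moreover have "x $ j = x $ m" using m assms(2) by blast
  ultimately show ?thesis by simp
qed

lemma funpow_fix: "f i = i \<Longrightarrow> (f ^^ k) i = i"
  by (induction k) auto

lemma delta_fixed:
  assumes "x \<in> Delta \<sigma>" "\<sigma> i = i" "j \<noteq> i"
  shows "x $ j \<noteq> x $ i"
proof -
  have "{k. same_cycle \<sigma> i k} \<in> perm_partition \<sigma>" unfolding perm_partition_def by blast
  then have "{k. same_cycle \<sigma> i k} \<in> vec_partition x" using assms(1) unfolding Delta_def by simp
  then obtain m where m: "{k. same_cycle \<sigma> i k} = {k. x $ k = x $ m}" unfolding vec_partition_def by blast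
  have sc: "same_cycle \<sigma> i k \<longleftrightarrow> k = i" for k
    unfolding same_cycle_def using funpow_fix[of \<sigma> i, OF assms(2)] by (auto intro: exI[of _ 0])
  have "x $ i = x $ m" using m sc by blast
  then show ?thesis using m sc assms(3) by auto
qed

lemma est:
  fixes \<Psi> :: "'a::real_normed_vector \<Rightarrow> 'b::real_normed_vector"
  assumes "open V" "z0 \<in> V" "\<And>z. z \<in> V \<Longrightarrow> (\<Psi> has_derivative blinfun_apply (\<Psi>' z)) (at z)"
    "continuous (at z0) \<Psi>'" "\<eta> > 0"
  shows "\<exists>r>0. ball z0 r \<subseteq> V \<and> (\<forall>a\<in>ball z0 r. \<forall>b\<in>ball z0 r.
           norm (\<Psi> a - \<Psi> b - blinfun_apply (\<Psi>' z0) (a - b)) \<le> \<eta> * norm (a - b))"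
proof -
  obtain d1 where d1: "d1 > 0" "\<And>x. dist x z0 < d1 \<Longrightarrow> dist (\<Psi>' x) (\<Psi>' z0) < \<eta>"
    using assms(4,5) unfolding continuous_at_eps_delta by blast
  obtain d2 where d2: "d2 > 0" "ball z0 d2 \<subseteq> V" using assms(1,2) open_contains_ball by blast
  define r where "r = min d1 d2"
  have r: "r > 0" "ball z0 r \<subseteq> V" using d1 d2 unfolding r_def by auto
  have "norm (\<Psi> a - \<Psi> b - blinfun_apply (\<Psi>' z0) (a - b)) \<le> \<eta> * norm (a - b)"
    if a: "a \<in> ball z0 r" and b: "b \<in> ball z0 r" for a b
  proof -
    have "norm (\<Psi> a - \<Psi> b - blinfun_apply (\<Psi>' z0) (a - b)) \<le> norm (a - b) * \<eta>"
    proof (rule differentiable_bound_linearization[where S="ball z0 r" and f=\<Psi> and a=b and b=a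
          and f'="\<lambda>x. blinfun_apply (\<Psi>' x)"])
      fix t :: real assume "t \<in> {0..1}"
      then show "b + t *\<^sub>R (a - b) \<in> ball z0 r"
      proof -
        have "(1 - t) *\<^sub>R b + t *\<^sub>R a \<in> ball z0 r"
          using convexD[OF convex_ball[of z0 r] b a, of "1 - t" t] \<open>t \<in> {0..1}\<close> by auto
        moreover have "(1 - t) *\<^sub>R b + t *\<^sub>R a = b + t *\<^sub>R (a - b)"
          by (simp add: algebra_simps)
        ultimately show ?thesis by simp
      qed
    next
      fix x assume "x \<in> ball z0 r"
      then show "(\<Psi> has_derivative blinfun_apply (\<Psi>' x)) (at x within ball z0 r)"
        using assms(3) r(2) has_derivative_at_withinI by blast
    next
      fix x assume x: "x \<in> ball z0 r"
      have "onorm (blinfun_apply (\<Psi>' x) - blinfun_apply (\<Psi>' z0)) = norm (\<Psi>' x - \<Psi>' z0)"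
        by (simp add: norm_blinfun.rep_eq blinfun.diff_left[abs_def] fun_diff_def)
      also have "\<dots> < \<eta>" using d1(2)[of x] x unfolding r_def by (simp add: dist_norm norm_minus_commute)
      finally show "onorm (blinfun_apply (\<Psi>' x) - blinfun_apply (\<Psi>' z0)) \<le> \<eta>" by simp
    next
      show "z0 \<in> ball z0 r" using r by simp
    qed
    then show ?thesis by (simp add: mult.commute)
  qed
  then show ?thesis using r by blast
qed

definition chart :: "(real^'n::finite) set \<Rightarrow> real^'n \<Rightarrow> (real^'n) set \<Rightarrow> (real^'n) set
   \<Rightarrow> (real^'n \<Rightarrow> real^'n) \<Rightarrow> (real^'n \<Rightarrow> real^'n) \<Rightarrow> (real^'n) set
   \<Rightarrow> (real^'n \<Rightarrow> ((real^'n) \<Rightarrow>\<^sub>L (real^'n))) \<Rightarrow> (real^'n \<Rightarrow> ((real^'n) \<Rightarrow>\<^sub>L (real^'n))) \<Rightarrow> bool" where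
  "chart M p U V \<Phi> \<Psi> L \<Phi>' \<Psi>' \<longleftrightarrow> open U \<and> p \<in> U \<and> open V \<and> (\<forall>y\<in>U. \<Psi> (\<Phi> y) = y) \<and>
     subspace L \<and> \<Phi> ` (M \<inter> U) = V \<inter> L \<and> \<Phi> ` U = V \<and>
     (\<forall>x\<in>U. (\<Phi> has_derivative blinfun_apply (\<Phi>' x)) (at x)) \<and>
     (\<forall>z\<in>V. (\<Psi> has_derivative blinfun_apply (\<Psi>' z)) (at z)) \<and>
     continuous (at p) \<Phi>' \<and> continuous (at (\<Phi> p)) \<Psi>'"

lemma chart_exists:
  assumes "C2_submanifold M" "p \<in> M"
  shows "\<exists>U V \<Phi> \<Psi> L \<Phi>' \<Psi>'. chart M p U V \<Phi> \<Psi> L \<Phi>' \<Psi>'"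
proof -
  have "\<exists>d::nat. \<forall>x\<in>M. \<exists>U V (\<Phi>::real^'a \<Rightarrow> real^'a) (\<Psi>::real^'a \<Rightarrow> real^'a) L.
        open U \<and> x \<in> U \<and> open V \<and> C2_on U \<Phi> \<and> C2_on V \<Psi> \<and>
        \<Phi> ` U = V \<and> (\<forall>y\<in>U. \<Psi> (\<Phi> y) = y) \<and> (\<forall>z\<in>V. \<Phi> (\<Psi> z) = z) \<and>
        subspace L \<and> dim L = d \<and> \<Phi> ` (M \<inter> U) = V \<inter> L"
    using assms(1) unfolding C2_submanifold_def by (rule conjunct2)
  then obtain d :: nat where H: "\<forall>x\<in>M. \<exists>U V (\<Phi>::real^'a \<Rightarrow> real^'a) (\<Psi>::real^'a \<Rightarrow> real^'a) L.
        open U \<and> x \<in> U \<and> open V \<and> C2_on U \<Phi> \<and> C2_on V \<Psi> \<and>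
        \<Phi> ` U = V \<and> (\<forall>y\<in>U. \<Psi> (\<Phi> y) = y) \<and> (\<forall>z\<in>V. \<Phi> (\<Psi> z) = z) \<and>
        subspace L \<and> dim L = d \<and> \<Phi> ` (M \<inter> U) = V \<inter> L"
    by (rule exE)
  from H[rule_format, OF assms(2)] obtain U V and \<Phi> \<Psi> :: "real^'a \<Rightarrow> real^'a" and L where
     c: "open U" "p \<in> U" "open V" "C2_on U \<Phi>" "C2_on V \<Psi>"
     "\<Phi> ` U = V" "\<forall>y\<in>U. \<Psi> (\<Phi> y) = y" "\<forall>z\<in>V. \<Phi> (\<Psi> z) = z" "subspace L" "dim L = d" "\<Phi> ` (M \<inter> U) = V \<inter> L"
    apply (elim exE conjE)
    subgoal for U V \<Phi> \<Psi> L by (rule that[of U V \<Phi> \<Psi> L])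
    done
  obtain \<Phi>' \<Phi>'' where P: "\<forall>x\<in>U. (\<Phi> has_derivative blinfun_apply (\<Phi>' x)) (at x)"
     "\<forall>x\<in>U. (\<Phi>' has_derivative blinfun_apply (\<Phi>'' x)) (at x)"
    using c(4) unfolding C2_on_def by blast
  obtain \<Psi>' \<Psi>'' where Q: "\<forall>x\<in>V. (\<Psi> has_derivative blinfun_apply (\<Psi>' x)) (at x)"
     "\<forall>x\<in>V. (\<Psi>' has_derivative blinfun_apply (\<Psi>'' x)) (at x)"
    using c(5) unfolding C2_on_def by blast
  have "\<Phi> p \<in> V" using c(2,6) by blast
  then have c1: "continuous (at (\<Phi> p)) \<Psi>'" using Q(2) has_derivative_continuous by blast
  have c2: "continuous (at p) \<Phi>'" using P(2) c(2) has_derivative_continuous by blast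
  have "chart M p U V \<Phi> \<Psi> L \<Phi>' \<Psi>'" unfolding chart_def
    apply (intro conjI)
    using c(1,2,3,6,7,9,11) P(1) Q(1) c1 c2 by simp_all
  then show ?thesis by blast
qed

lemma chart_M:
  assumes "chart M p U V \<Phi> \<Psi> L \<Phi>' \<Psi>'" "z \<in> V" "z \<in> L"
  shows "\<Psi> z \<in> M \<and> \<Psi> z \<in> U \<and> \<Phi> (\<Psi> z) = z"
proof -
  have "z \<in> \<Phi> ` (M \<inter> U)" using assms unfolding chart_def by blast
  then obtain y where "y \<in> M" "y \<in> U" "z = \<Phi> y" by blast
  then show ?thesis using assms(1) unfolding chart_def by auto
qed

lemma chart_L:
  assumes "chart M p U V \<Phi> \<Psi> L \<Phi>' \<Psi>'" "y \<in> M" "y \<in> U"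
  shows "\<Phi> y \<in> V \<and> \<Phi> y \<in> L \<and> \<Psi> (\<Phi> y) = y"
proof -
  have "\<Phi> y \<in> \<Phi> ` (M \<inter> U)" using assms by blast
  then show ?thesis using assms unfolding chart_def by auto
qed

lemma tan:
  assumes ch: "chart M p U V \<Phi> \<Psi> L \<Phi>' \<Psi>'" and pM: "p \<in> M" and w: "w \<in> L"
  shows "blinfun_apply (\<Psi>' (\<Phi> p)) w \<in> tangent_space M p"
proof -
  let ?z = "\<Phi> p"
  have pU: "p \<in> U" using ch unfolding chart_def by blast
  have zV: "?z \<in> V" "?z \<in> L" "\<Psi> ?z = p" using chart_L[OF ch pM pU] by auto
  have sub: "subspace L" "open V" using ch unfolding chart_def by auto
  obtain r where r: "r > 0" "ball ?z r \<subseteq> V" using sub(2) zV(1) open_contains_ball by blast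
  define \<epsilon> where "\<epsilon> = r / (norm w + 1)"
  have nw: "norm w + 1 > 0" using norm_ge_zero[of w] by linarith
  have \<epsilon>: "\<epsilon> > 0" using r nw unfolding \<epsilon>_def by (simp add: divide_pos_pos)
  define \<gamma> where "\<gamma> t = \<Psi> (?z + t *\<^sub>R w)" for t :: real
  have "\<gamma> t \<in> M" if t: "\<bar>t\<bar> < \<epsilon>" for t
  proof -
    have "\<bar>t\<bar> * norm w \<le> \<bar>t\<bar> * (norm w + 1)" by (simp add: mult_left_mono)
    also have "\<dots> < \<epsilon> * (norm w + 1)" using t nw by (simp add: mult_strict_right_mono)
    also have "\<dots> = r" unfolding \<epsilon>_def using nw by simp
    finally have "norm (t *\<^sub>R w) < r" by simp
    then have "?z + t *\<^sub>R w \<in> V" using r(2) by (auto simp: dist_norm)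
    moreover have "?z + t *\<^sub>R w \<in> L" using sub(1) zV(2) w by (simp add: subspace_add subspace_scale)
    ultimately show ?thesis using chart_M[OF ch] unfolding \<gamma>_def by blast
  qed
  moreover have "\<gamma> 0 = p" unfolding \<gamma>_def using zV by simp
  moreover have "(\<gamma> has_vector_derivative blinfun_apply (\<Psi>' ?z) w) (at 0)"
  proof -
    have d1: "((\<lambda>t. ?z + t *\<^sub>R w) has_vector_derivative w) (at 0)"
      by (auto intro!: derivative_eq_intros)
    have "(\<Psi> has_derivative blinfun_apply (\<Psi>' ?z)) (at ((\<lambda>t. ?z + t *\<^sub>R w) 0))"
      using ch zV(1) unfolding chart_def by simp
    then have d2: "(\<Psi> has_derivative blinfun_apply (\<Psi>' ?z)) (at ((\<lambda>t. ?z + t *\<^sub>R w) 0) within (\<lambda>t. ?z + t *\<^sub>R w) ` UNIV)"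
      using has_derivative_at_withinI by blast
    show ?thesis using vector_derivative_diff_chain_within[OF d1 d2] unfolding \<gamma>_def o_def by simp
  qed
  ultimately show ?thesis unfolding tangent_space_def using \<epsilon> by blast
qed

lemma key:
  assumes ch: "chart M p U V \<Phi> \<Psi> L \<Phi>' \<Psi>'" and pM: "p \<in> M"
    and orth: "\<forall>w\<in>L. u \<bullet> blinfun_apply (\<Psi>' (\<Phi> p)) w = 0"
    and seq: "\<forall>\<epsilon>>0. \<exists>m m' c. m \<in> M \<and> m' \<in> M \<and> dist m p < \<epsilon> \<and> dist m' p < \<epsilon> \<and> c \<noteq> 0
                  \<and> m - m' = c *\<^sub>R e"
  shows "u \<bullet> e = 0"
proof (rule ccontr)
  assume ne: "u \<bullet> e \<noteq> 0"
  let ?z = "\<Phi> p"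
  have pU: "p \<in> U" and oU: "open U" and oV: "open V" and sub: "subspace L"
    using ch unfolding chart_def by auto
  have zV: "?z \<in> V" using chart_L[OF ch pM pU] by auto
  have dPhi: "\<And>x. x \<in> U \<Longrightarrow> (\<Phi> has_derivative blinfun_apply (\<Phi>' x)) (at x)"
    and dPsi: "\<And>z. z \<in> V \<Longrightarrow> (\<Psi> has_derivative blinfun_apply (\<Psi>' z)) (at z)"
    and cPhi': "continuous (at p) \<Phi>'" and cPsi': "continuous (at ?z) \<Psi>'"
    using ch unfolding chart_def by auto
  obtain r1 where r1: "r1 > 0" "ball p r1 \<subseteq> U"
     "\<forall>a\<in>ball p r1. \<forall>b\<in>ball p r1. norm (\<Phi> a - \<Phi> b - blinfun_apply (\<Phi>' p) (a - b)) \<le> 1 * norm (a - b)"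
    using est[OF oU pU dPhi cPhi', of 1] by auto
  define B where "B = norm (\<Phi>' p) + 1"
  have lip: "norm (\<Phi> a - \<Phi> b) \<le> B * norm (a - b)" if "a \<in> ball p r1" "b \<in> ball p r1" for a b
  proof -
    have "norm (\<Phi> a - \<Phi> b) \<le> norm (\<Phi> a - \<Phi> b - blinfun_apply (\<Phi>' p) (a - b)) + norm (blinfun_apply (\<Phi>' p) (a - b))"
      by (metis diff_add_cancel norm_triangle_ineq)
    also have "\<dots> \<le> norm (a - b) + norm (\<Phi>' p) * norm (a - b)"
      using r1(3) that norm_blinfun[of "\<Phi>' p" "a - b"] by force
    finally show ?thesis unfolding B_def by (simp add: algebra_simps)
  qed
  have B0: "B > 0" unfolding B_def using norm_ge_zero[of "\<Phi>' p"] by linarith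
  define X where "X = norm u * B * norm e"
  have X0: "X \<ge> 0" unfolding X_def using B0 by simp
  define \<eta> where "\<eta> = \<bar>u \<bullet> e\<bar> / (2 * (X + 1))"
  have \<eta>: "\<eta> > 0" unfolding \<eta>_def using ne X0 by (simp add: add_nonneg_pos)
  have Xeta: "X * \<eta> < \<bar>u \<bullet> e\<bar>"
  proof -
    have "X * \<eta> \<le> (X + 1) * \<eta>" using \<eta> by simp
    also have "\<dots> = \<bar>u \<bullet> e\<bar> / 2" unfolding \<eta>_def using X0 by (simp add: field_simps)
    also have "\<dots> < \<bar>u \<bullet> e\<bar>" using ne by simp
    finally show ?thesis .
  qed
  obtain r2 where r2: "r2 > 0" "ball ?z r2 \<subseteq> V"
     "\<forall>a\<in>ball ?z r2. \<forall>b\<in>ball ?z r2. norm (\<Psi> a - \<Psi> b - blinfun_apply (\<Psi>' ?z) (a - b)) \<le> \<eta> * norm (a - b)"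
    using est[OF oV zV dPsi cPsi' \<eta>] by auto
  have "continuous (at p) \<Phi>" using dPhi[OF pU] has_derivative_continuous by blast
  then obtain r3 where r3: "r3 > 0" "\<And>x. dist x p < r3 \<Longrightarrow> dist (\<Phi> x) ?z < r2"
    using r2(1) unfolding continuous_at_eps_delta by blast
  obtain m m' c where mm: "m \<in> M" "m' \<in> M" "dist m p < min r1 r3" "dist m' p < min r1 r3" "c \<noteq> 0"
     "m - m' = c *\<^sub>R e"
    using seq r1(1) r3(1) by (metis min_less_iff_conj)
  have mb: "m \<in> ball p r1" "m' \<in> ball p r1" using mm by (auto simp: dist_commute)
  then have mU: "m \<in> U" "m' \<in> U" using r1(2) by auto
  define a where "a = \<Phi> m"
  define b where "b = \<Phi> m'"
  have a: "a \<in> L" "\<Psi> a = m" using chart_L[OF ch mm(1) mU(1)] unfolding a_def by auto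
  have b: "b \<in> L" "\<Psi> b = m'" using chart_L[OF ch mm(2) mU(2)] unfolding b_def by auto
  have ab: "a \<in> ball ?z r2" "b \<in> ball ?z r2" using r3(2) mm(3,4) unfolding a_def b_def
    by (auto simp: dist_commute)
  have abL: "a - b \<in> L" using sub a b subspace_diff by blast
  have "u \<bullet> (m - m') = u \<bullet> (\<Psi> a - \<Psi> b - blinfun_apply (\<Psi>' ?z) (a - b)) + u \<bullet> blinfun_apply (\<Psi>' ?z) (a - b)"
    using a b by (simp add: inner_diff_right)
  also have "\<dots> = u \<bullet> (\<Psi> a - \<Psi> b - blinfun_apply (\<Psi>' ?z) (a - b))" using orth abL by simp
  finally have "\<bar>u \<bullet> (m - m')\<bar> \<le> norm u * norm (\<Psi> a - \<Psi> b - blinfun_apply (\<Psi>' ?z) (a - b))"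
    by (metis Cauchy_Schwarz_ineq2)
  also have "\<dots> \<le> norm u * (\<eta> * norm (a - b))" using r2(3) ab by (simp add: mult_left_mono)
  also have "\<dots> \<le> norm u * (\<eta> * (B * norm (m - m')))"
    using lip[OF mb] \<eta> unfolding a_def b_def by (simp add: mult_left_mono)
  finally have "\<bar>c\<bar> * \<bar>u \<bullet> e\<bar> \<le> \<bar>c\<bar> * (X * \<eta>)" using mm(6) unfolding X_def
    by (simp add: abs_mult algebra_simps)
  then have "\<bar>u \<bullet> e\<bar> \<le> X * \<eta>" using mm(5) by simp
  then show False using Xeta by simp
qed

lemma intl:
  assumes ch: "chart M p U V \<Phi> \<Psi> L \<Phi>' \<Psi>'" and pM: "p \<in> M"
    and seq: "\<forall>\<epsilon>>0. \<exists>q. q \<in> M \<and> dist q p < \<epsilon> \<and> (\<exists>\<delta>>0. \<forall>m\<in>M. dist m q < \<delta> \<longrightarrow> e \<bullet> m = 0)"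
  shows "\<forall>w\<in>L. e \<bullet> blinfun_apply (\<Psi>' (\<Phi> p)) w = 0"
proof
  fix w assume wL: "w \<in> L"
  let ?z = "\<Phi> p"
  define x where "x = e \<bullet> blinfun_apply (\<Psi>' ?z) w"
  show "e \<bullet> blinfun_apply (\<Psi>' ?z) w = 0"
  proof (rule ccontr)
    assume "e \<bullet> blinfun_apply (\<Psi>' ?z) w \<noteq> 0"
    then have x0: "x \<noteq> 0" unfolding x_def .
    then have w0: "w \<noteq> 0" unfolding x_def by auto
    have pU: "p \<in> U" and oU: "open U" and oV: "open V" and sub: "subspace L"
      using ch unfolding chart_def by auto
    have zV: "?z \<in> V" using chart_L[OF ch pM pU] by auto
    have dPhi: "\<And>x. x \<in> U \<Longrightarrow> (\<Phi> has_derivative blinfun_apply (\<Phi>' x)) (at x)"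
      and dPsi: "\<And>z. z \<in> V \<Longrightarrow> (\<Psi> has_derivative blinfun_apply (\<Psi>' z)) (at z)"
      and cPsi': "continuous (at ?z) \<Psi>'"
      using ch unfolding chart_def by auto
    define X where "X = norm e * norm w"
    have X0: "X \<ge> 0" unfolding X_def by simp
    define \<eta> where "\<eta> = \<bar>x\<bar> / (2 * (X + 1))"
    have \<eta>: "\<eta> > 0" unfolding \<eta>_def using x0 X0 by (simp add: add_nonneg_pos)
    have Xeta: "X * \<eta> < \<bar>x\<bar>"
    proof -
      have "X * \<eta> \<le> (X + 1) * \<eta>" using \<eta> by simp
      also have "\<dots> = \<bar>x\<bar> / 2" unfolding \<eta>_def using X0 by (simp add: field_simps)
      also have "\<dots> < \<bar>x\<bar>" using x0 by simp
      finally show ?thesis .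
    qed
    obtain r2 where r2: "r2 > 0" "ball ?z r2 \<subseteq> V"
       "\<forall>a\<in>ball ?z r2. \<forall>b\<in>ball ?z r2. norm (\<Psi> a - \<Psi> b - blinfun_apply (\<Psi>' ?z) (a - b)) \<le> \<eta> * norm (a - b)"
      using est[OF oV zV dPsi cPsi' \<eta>] by auto
    have "continuous (at p) \<Phi>" using dPhi[OF pU] has_derivative_continuous by blast
    then obtain r3 where r3: "r3 > 0" "\<And>x. dist x p < r3 \<Longrightarrow> dist (\<Phi> x) ?z < r2"
      using r2(1) unfolding continuous_at_eps_delta by blast
    obtain r1 where r1: "r1 > 0" "ball p r1 \<subseteq> U" using oU pU open_contains_ball by blast
    obtain q \<delta> where q: "q \<in> M" "dist q p < min r1 r3" "\<delta> > 0" "\<And>m. m \<in> M \<Longrightarrow> dist m q < \<delta> \<Longrightarrow> e \<bullet> m = 0"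
      using seq r1(1) r3(1) by (metis min_less_iff_conj)
    have qU: "q \<in> U" using q(2) r1(2) by (auto simp: dist_commute)
    define zq where "zq = \<Phi> q"
    have zq: "zq \<in> V" "zq \<in> L" "\<Psi> zq = q" using chart_L[OF ch q(1) qU] unfolding zq_def by auto
    have zqb: "dist zq ?z < r2" using r3(2) q(2) unfolding zq_def by simp
    have eq: "e \<bullet> q = 0" using q(4)[OF q(1)] q(3) by simp
    have "continuous (at zq) \<Psi>" using dPsi[OF zq(1)] has_derivative_continuous by blast
    then obtain \<rho>1 where \<rho>1: "\<rho>1 > 0" "\<And>b. dist b zq < \<rho>1 \<Longrightarrow> dist (\<Psi> b) (\<Psi> zq) < \<delta>"
      using q(3) unfolding continuous_at_eps_delta by blast
    define \<rho> where "\<rho> = min \<rho>1 (r2 - dist zq ?z)"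
    have \<rho>: "\<rho> > 0" unfolding \<rho>_def using \<rho>1 zqb by simp
    define s where "s = \<rho> / (2 * norm w)"
    have s: "s > 0" unfolding s_def using \<rho> w0 by simp
    define b where "b = zq + s *\<^sub>R w"
    have db: "dist b zq = \<rho> / 2" unfolding b_def s_def using w0 \<rho> by (simp add: dist_norm)
    have bball: "b \<in> ball ?z r2"
    proof -
      have "dist ?z b \<le> dist ?z zq + dist zq b" by (rule dist_triangle)
      also have "\<dots> < r2"
      proof -
        have "\<rho> \<le> r2 - dist zq ?z" unfolding \<rho>_def by simp
        then show ?thesis using db \<rho> by (simp add: dist_commute)
      qed
      finally show ?thesis by simp
    qed
    have bL: "b \<in> L" unfolding b_def using sub zq(2) wL by (simp add: subspace_add subspace_scale)
    have bM: "\<Psi> b \<in> M" using chart_M[OF ch _ bL] bball r2(2) by blast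
    have "\<rho> \<le> \<rho>1" unfolding \<rho>_def by simp
    then have "dist b zq < \<rho>1" using db \<rho> by simp
    then have "dist (\<Psi> b) q < \<delta>" using \<rho>1(2)[of b] zq(3) by simp
    then have eb: "e \<bullet> \<Psi> b = 0" using q(4)[OF bM] by simp
    have zqball: "zq \<in> ball ?z r2" using zqb by (simp add: dist_commute)
    have est1: "norm (\<Psi> b - \<Psi> zq - blinfun_apply (\<Psi>' ?z) (b - zq)) \<le> \<eta> * norm (b - zq)"
      using r2(3) bball zqball by blast
    have bz: "b - zq = s *\<^sub>R w" unfolding b_def by simp
    have "e \<bullet> (\<Psi> b - \<Psi> zq - blinfun_apply (\<Psi>' ?z) (b - zq)) = - s * x"
      using eb eq zq(3) bz unfolding x_def by (simp add: inner_diff_right blinfun.scaleR_right)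
    then have "s * \<bar>x\<bar> \<le> norm e * norm (\<Psi> b - \<Psi> zq - blinfun_apply (\<Psi>' ?z) (b - zq))"
      using Cauchy_Schwarz_ineq2[of e "\<Psi> b - \<Psi> zq - blinfun_apply (\<Psi>' ?z) (b - zq)"] s
      by (simp add: abs_mult)
    also have "\<dots> \<le> norm e * (\<eta> * norm (b - zq))" using est1 by (simp add: mult_left_mono)
    also have "\<dots> = s * (X * \<eta>)" using bz s unfolding X_def by (simp add: algebra_simps)
    finally have "\<bar>x\<bar> \<le> X * \<eta>" using s by simp
    then show False using Xeta by simp
  qed
qed

lemma perm_act_tr: "perm_act (Transposition.transpose i j) x $ k = x $ (Transposition.transpose i j k)"
  by (simp add: perm_act_def)

lemma sym_near:
  fixes M :: "(real^'n::{finite,linorder}) set"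
  assumes ls: "locally_symmetric M" and pM: "p \<in> M" and pij: "p $ i = p $ j" and ij: "i \<noteq> j"
    and near: "\<forall>\<delta>>0. \<exists>m\<in>M. dist m p < \<delta> \<and> m $ i \<noteq> m $ j"
  shows "\<forall>\<epsilon>>0. \<exists>m m' c. m \<in> M \<and> m' \<in> M \<and> dist m p < \<epsilon> \<and> dist m' p < \<epsilon> \<and> c \<noteq> 0
                  \<and> m - m' = c *\<^sub>R (axis i 1 - axis j 1)"
proof (intro allI impI)
  fix \<epsilon> :: real assume \<epsilon>: "\<epsilon> > 0"
  let ?t = "Transposition.transpose i j"
  let ?e = "axis i (1::real) - axis j (1::real)"
  have "\<forall>x\<in>M. \<exists>\<delta>>0. \<forall>y\<in>M \<inter> ball x \<delta>. \<forall>\<sigma>.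
        \<sigma> permutes UNIV \<and> perm_act \<sigma> y = y \<longrightarrow>
        perm_act \<sigma> ` (M \<inter> ball x \<delta>) = M \<inter> ball x \<delta>"
    using ls unfolding locally_symmetric_def by (rule conjunct2)
  from this[rule_format, OF pM] obtain \<delta>0 where \<delta>0: "\<delta>0 > 0" "\<forall>y\<in>M \<inter> ball p \<delta>0. \<forall>\<sigma>.
        \<sigma> permutes UNIV \<and> perm_act \<sigma> y = y \<longrightarrow>
        perm_act \<sigma> ` (M \<inter> ball p \<delta>0) = M \<inter> ball p \<delta>0"
    by (elim exE conjE) (rule that)
  have tp: "perm_act ?t p = p" using pij by (simp add: vec_eq_iff perm_act_tr Transposition.transpose_def)
  have pin: "p \<in> M \<inter> ball p \<delta>0" using pM \<delta>0(1) by simp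
  have tt: "?t permutes UNIV \<and> perm_act ?t p = p" using permutes_swap_id[of i UNIV j] tp by simp
  have img: "perm_act ?t ` (M \<inter> ball p \<delta>0) = M \<inter> ball p \<delta>0"
    using \<delta>0(2) pin tt by blast
  have "min (\<epsilon>/5) \<delta>0 > 0" using \<epsilon> \<delta>0(1) by simp
  then obtain m where m: "m \<in> M" "dist m p < min (\<epsilon>/5) \<delta>0" "m $ i \<noteq> m $ j"
    using near by blast
  define m' where "m' = perm_act ?t m"
  have "m \<in> M \<inter> ball p \<delta>0" using m by (simp add: dist_commute)
  then have m'M: "m' \<in> M" using img unfolding m'_def by blast
  have diff: "m - m' = (m $ i - m $ j) *\<^sub>R ?e"
    unfolding m'_def by (simp add: vec_eq_iff perm_act_tr Transposition.transpose_def axis_def)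
  have "\<bar>m $ i - m $ j\<bar> = \<bar>(m - p) $ i - (m - p) $ j\<bar>" using pij by simp
  also have "\<dots> \<le> \<bar>(m - p) $ i\<bar> + \<bar>(m - p) $ j\<bar>" by linarith
  also have "\<dots> \<le> 2 * dist m p" using component_le_norm_cart[of "m - p" i] component_le_norm_cart[of "m - p" j]
    by (simp add: dist_norm)
  finally have c1: "\<bar>m $ i - m $ j\<bar> \<le> 2 * dist m p" .
  have ne: "norm ?e \<le> 2"
    using norm_triangle_ineq4[of "axis i (1::real)" "axis j (1::real)"] by (simp add: norm_axis_1)
  have "dist m' m = norm (m - m')" by (simp add: dist_norm norm_minus_commute)
  also have "\<dots> = \<bar>m $ i - m $ j\<bar> * norm ?e" unfolding diff by simp
  also have "\<dots> \<le> (2 * dist m p) * 2" using c1 ne by (intro mult_mono) auto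
  finally have "dist m' p \<le> 5 * dist m p" using dist_triangle[of m' p m] by (simp add: dist_commute)
  then have "dist m' p < \<epsilon>" using m(2) by simp
  then show "\<exists>m m' c. m \<in> M \<and> m' \<in> M \<and> dist m p < \<epsilon> \<and> dist m' p < \<epsilon> \<and> c \<noteq> 0
                  \<and> m - m' = c *\<^sub>R ?e"
  proof -
    have "dist m p * 5 < \<epsilon>" using m(2) by simp
    then have "dist m p < \<epsilon>" using zero_le_dist[of m p] by linarith
    then show ?thesis using m m'M diff \<open>dist m' p < \<epsilon>\<close>
      by (intro exI[of _ m] exI[of _ m'] exI[of _ "m $ i - m $ j"]) simp
  qed
qed

theorem theorem3p34:
  fixes M :: "(real^'n::{finite,linorder}) set"
    and \<sigma>s \<sigma> :: "'n::{finite,linorder} \<Rightarrow> 'n" and xbar v :: "real^'n::{finite,linorder}"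
  assumes "locally_symmetric_C2_submanifold M"
    and "characteristic_perm M \<sigma>s"
    and "\<sigma> permutes UNIV"
    and "xbar \<in> M \<inter> Delta \<sigma>"
    and "v \<in> normal_space M xbar"
  shows "\<forall>i j. i \<notin> supp \<sigma>s \<and> j \<notin> supp \<sigma>s \<and> same_cycle \<sigma> i j \<longrightarrow> v $ i = v $ j"
proof (intro allI impI)
  fix i j assume h: "i \<notin> supp \<sigma>s \<and> j \<notin> supp \<sigma>s \<and> same_cycle \<sigma> i j"
  have si: "\<sigma>s i = i" and sj: "\<sigma>s j = j" using h unfolding supp_def by auto
  have xM: "xbar \<in> M" and xij: "xbar $ i = xbar $ j" using assms(4) delta_same h by auto
  have C2: "C2_submanifold M" and ls: "locally_symmetric M"
    using assms(1) unfolding locally_symmetric_C2_submanifold_def by auto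
  show "v $ i = v $ j"
  proof (cases "i = j")
    case True then show ?thesis by simp
  next
    case ij: False
    show ?thesis
    proof (rule ccontr)
      assume vne: "v $ i \<noteq> v $ j"
      define e where "e = axis i 1 - axis j (1::real)"
      have ee: "e \<bullet> x = x $ i - x $ j" "x \<bullet> e = x $ i - x $ j" for x
        unfolding e_def by (simp_all add: inner_diff_right inner_diff_left inner_axis inner_commute)
      define A where "A = {q \<in> M. \<exists>\<delta>>0. \<forall>m\<in>M. dist m q < \<delta> \<longrightarrow> e \<bullet> m = 0}"
      have AM: "A \<subseteq> M" unfolding A_def by auto
      have Ae: "q \<in> A \<Longrightarrow> e \<bullet> q = 0" for q unfolding A_def by auto
      have xA: "xbar \<in> A"
      proof (rule ccontr)
        assume "xbar \<notin> A"
        then have "\<not> (\<exists>\<delta>>0. \<forall>m\<in>M. dist m xbar < \<delta> \<longrightarrow> e \<bullet> m = 0)"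
          using xM unfolding A_def by blast
        then have "\<forall>\<delta>>0. \<exists>m\<in>M. dist m xbar < \<delta> \<and> e \<bullet> m \<noteq> 0" by blast
        then have near: "\<forall>\<delta>>0. \<exists>m\<in>M. dist m xbar < \<delta> \<and> m $ i \<noteq> m $ j"
          by (simp add: ee)
        have sq: "\<forall>\<epsilon>>0. \<exists>m m' c. m \<in> M \<and> m' \<in> M \<and> dist m xbar < \<epsilon> \<and> dist m' xbar < \<epsilon> \<and> c \<noteq> 0
                  \<and> m - m' = c *\<^sub>R e"
          using sym_near[OF ls xM xij ij near] unfolding e_def .
        obtain U V \<Phi> \<Psi> L \<Phi>' \<Psi>' where ch: "chart M xbar U V \<Phi> \<Psi> L \<Phi>' \<Psi>'"
          using chart_exists[OF C2 xM] by blast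
        have orth: "\<forall>w\<in>L. v \<bullet> blinfun_apply (\<Psi>' (\<Phi> xbar)) w = 0"
          using tan[OF ch xM] assms(5) unfolding normal_space_def by blast
        have "v \<bullet> e = 0" by (rule key[OF ch xM orth sq])
        then show False using vne ee by simp
      qed
      have opA: "openin (top_of_set M) A"
        unfolding openin_euclidean_subtopology_iff
      proof (intro conjI AM ballI)
        fix q assume qA: "q \<in> A"
        then obtain \<delta> where \<delta>: "\<delta> > 0" "\<forall>m\<in>M. dist m q < \<delta> \<longrightarrow> e \<bullet> m = 0" unfolding A_def by blast
        have "\<forall>q'\<in>M. dist q' q < \<delta>/2 \<longrightarrow> q' \<in> A"
        proof (intro ballI impI)
          fix q' assume q': "q' \<in> M" "dist q' q < \<delta>/2"
          have "\<forall>m\<in>M. dist m q' < \<delta>/2 \<longrightarrow> e \<bullet> m = 0"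
          proof (intro ballI impI)
            fix m assume m: "m \<in> M" "dist m q' < \<delta>/2"
            have "dist m q \<le> dist m q' + dist q' q" by (rule dist_triangle)
            then have "dist m q < \<delta>" using m(2) q'(2) by linarith
            then show "e \<bullet> m = 0" using \<delta>(2) m(1) by blast
          qed
          then show "q' \<in> A" unfolding A_def using q' \<delta> by (auto intro!: exI[of _ "\<delta>/2"])
        qed
        then show "\<exists>e>0. \<forall>x'\<in>M. dist x' q < e \<longrightarrow> x' \<in> A" using \<delta> by (intro exI[of _ "\<delta>/2"]) auto
      qed
      have opB: "openin (top_of_set M) (M - A)"
        unfolding openin_euclidean_subtopology_iff
      proof (intro conjI ballI)
        show "M - A \<subseteq> M" by auto
        fix q assume qB: "q \<in> M - A"
        show "\<exists>\<epsilon>>0. \<forall>x'\<in>M. dist x' q < \<epsilon> \<longrightarrow> x' \<in> M - A"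
        proof (rule ccontr)
          assume "\<not> ?thesis"
          then have cl: "\<forall>\<epsilon>>0. \<exists>q'\<in>A. dist q' q < \<epsilon>" by blast
          have qM: "q \<in> M" using qB by auto
          obtain U V \<Phi> \<Psi> L \<Phi>' \<Psi>' where ch: "chart M q U V \<Phi> \<Psi> L \<Phi>' \<Psi>'"
            using chart_exists[OF C2 qM] by blast
          have seq1: "\<forall>\<epsilon>>0. \<exists>q'. q' \<in> M \<and> dist q' q < \<epsilon> \<and> (\<exists>\<delta>>0. \<forall>m\<in>M. dist m q' < \<delta> \<longrightarrow> e \<bullet> m = 0)"
            using cl unfolding A_def by blast
          have orth: "\<forall>w\<in>L. e \<bullet> blinfun_apply (\<Psi>' (\<Phi> q)) w = 0" by (rule intl[OF ch qM seq1])
          have eq: "e \<bullet> q = 0"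
          proof (rule ccontr)
            assume ne: "e \<bullet> q \<noteq> 0"
            have n1: "norm e + 1 > 0" using norm_ge_zero[of e] by linarith
            have "\<bar>e \<bullet> q\<bar> / (norm e + 1) > 0" using ne n1 by simp
            then obtain q' where q': "q' \<in> A" "dist q' q < \<bar>e \<bullet> q\<bar> / (norm e + 1)"
              using cl by blast
            have "\<bar>e \<bullet> q\<bar> = \<bar>e \<bullet> (q - q')\<bar>" using Ae[OF q'(1)] by (simp add: inner_diff_right)
            also have "\<dots> \<le> norm e * norm (q - q')" by (rule Cauchy_Schwarz_ineq2)
            also have "\<dots> \<le> (norm e + 1) * dist q' q" by (simp add: dist_norm norm_minus_commute mult_right_mono)
            also have "\<dots> < \<bar>e \<bullet> q\<bar>" using q'(2) n1
              by (simp add: pos_less_divide_eq mult.commute)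
            finally show False by simp
          qed
          have "\<not> (\<exists>\<delta>>0. \<forall>m\<in>M. dist m q < \<delta> \<longrightarrow> e \<bullet> m = 0)"
            using qB unfolding A_def by blast
          then have "\<forall>\<delta>>0. \<exists>m\<in>M. dist m q < \<delta> \<and> e \<bullet> m \<noteq> 0" by blast
          then have near: "\<forall>\<delta>>0. \<exists>m\<in>M. dist m q < \<delta> \<and> m $ i \<noteq> m $ j"
            by (simp add: ee)
          have sq: "\<forall>\<epsilon>>0. \<exists>m m' c. m \<in> M \<and> m' \<in> M \<and> dist m q < \<epsilon> \<and> dist m' q < \<epsilon> \<and> c \<noteq> 0
                  \<and> m - m' = c *\<^sub>R e"
          proof -
            have qij: "q $ i = q $ j" using eq ee by simp
            show ?thesis using sym_near[OF ls qM qij ij near] unfolding e_def .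
          qed
          have "e \<bullet> e = 0" by (rule key[OF ch qM orth sq])
          moreover have "e $ i = 1" "e $ j = -1" unfolding e_def using ij by (simp_all add: axis_def)
          ultimately show False using ee(1)[of e] by simp
        qed
      qed
      have clA: "closedin (top_of_set M) A" unfolding closedin_def using opB AM by simp
      have conn: "connected M" using C2 unfolding C2_submanifold_def by blast
      have "A = {} \<or> A = M" using iffD1[OF connected_clopen conn] opA clA by blast
      then have "A = M" using xA by blast
      obtain y \<delta> where y: "y \<in> M" "\<delta> > 0" "M \<inter> ball y \<delta> \<subseteq> Delta \<sigma>s"
        using assms(2) unfolding characteristic_perm_def by blast
      have "y \<in> Delta \<sigma>s" using y by auto
      then have "y $ j \<noteq> y $ i" using delta_fixed si ij by metis
      moreover have "e \<bullet> y = 0" using Ae \<open>A = M\<close> y(1) by simp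
      ultimately show False using ee by simp
    qed
  qed
qed

end
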